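(* Let $k, m \in \mathbb N$ with $k \ge 2$, and let $\phi \colon \mathcal H_{2k}^0 \to M_m$ be a real linear map with $\phi(\mathcal{IH}_{2k}^0) \subset \mathcal U_m$. Let $H \in \mathcal{IH}_{2(k-2)}^0$, $K \in \mathcal H_2\cap\mathcal U_2$, $Z \in \mathcal U_2$, $T \in M_{2(k-1),2}$ and $V \in M_{2(k-1),2(k-2)}$ be such that the block matrix $\begin{bmatrix} V & T\end{bmatrix} \in \mathcal U_{2(k-1)}$. Then $$\left|\phi\!\left(\begin{bmatrix} & TZ \\ Z^\ast T^\ast & \end{bmatrix}\right)\right|^2 = \left|\phi\!\left(TKT^\ast \oplus (-Z^\ast K Z)\right)\right|^2 = I_m - \left|\phi\!\left(VHV^\ast \oplus 0_2\right)\right|^2$$ and $$\operatorname{Re}\!\left(\phi\!\left(TKT^\ast \oplus (-Z^\ast KZ)\right)^\ast\, \phi\!\left(\begin{bmatrix} & TZ \\ Z^\ast T^\ast & \end{bmatrix}\right)\right) = 0_m.$$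
   Context: $M_{p,q}$ is the set of $p\times q$ complex matrices, $M_m = M_{m,m}$, $\mathcal U_n$ the $n\times n$ unitary matrices, $\mathcal H_n$ the $n\times n$ complex hermitian matrices, $\mathcal H_n^0$ the trace-zero ones, $\mathcal{IH}_n^0 = \mathcal H_n^0\cap\mathcal U_n$ (for $n=0$ these are the empty matrices). The block matrix $\begin{bmatrix} & TZ \\ Z^\ast T^\ast & \end{bmatrix}$ is the $2k\times 2k$ matrix with zero diagonal blocks of sizes $2(k-1)$ and $2$. $|A| = (A^\ast A)^{1/2}$, $\operatorname{Re}A = \tfrac12(A+A^\ast)$, $\oplus$ is block-diagonal sum. *)

theory Defs
  imports "Jordan_Normal_Form.Matrix"
begin

definition adj :: "complex mat \<Rightarrow> complex mat" where
  "adj A = mat (dim_col A) (dim_row A) (\<lambda>(i,j). cnj (A $$ (j,i)))"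

definition mtrace :: "complex mat \<Rightarrow> complex" where
  "mtrace A = (\<Sum>i<dim_row A. A $$ (i,i))"

definition unitary_mat :: "nat \<Rightarrow> complex mat \<Rightarrow> bool" where
  "unitary_mat n U \<longleftrightarrow> U \<in> carrier_mat n n \<and> adj U * U = 1\<^sub>m n \<and> U * adj U = 1\<^sub>m n"

definition hermitian_mat :: "nat \<Rightarrow> complex mat \<Rightarrow> bool" where
  "hermitian_mat n A \<longleftrightarrow> A \<in> carrier_mat n n \<and> adj A = A"

definition H0 :: "nat \<Rightarrow> complex mat set" where
  "H0 n = {A. hermitian_mat n A \<and> mtrace A = 0}"

definition IH0 :: "nat \<Rightarrow> complex mat set" where
  "IH0 n = {A. A \<in> H0 n \<and> unitary_mat n A}"

definition dsum :: "complex mat \<Rightarrow> complex mat \<Rightarrow> complex mat" where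
  "dsum A B = four_block_mat A (0\<^sub>m (dim_row A) (dim_col B)) (0\<^sub>m (dim_row B) (dim_col A)) B"

definition hcat :: "complex mat \<Rightarrow> complex mat \<Rightarrow> complex mat" where
  "hcat A B = mat (dim_row A) (dim_col A + dim_col B)
     (\<lambda>(i,j). if j < dim_col A then A $$ (i,j) else B $$ (i, j - dim_col A))"

text \<open>|A|^2 = ((A^* A)^(1/2))^2 = A^* A.\<close>
definition abs_sq :: "complex mat \<Rightarrow> complex mat" where
  "abs_sq A = adj A * A"

definition re_mat :: "complex mat \<Rightarrow> complex mat" where
  "re_mat A = (1/2 :: complex) \<cdot>\<^sub>m (A + adj A)"

definition real_linear_on_H0 :: "nat \<Rightarrow> nat \<Rightarrow> (complex mat \<Rightarrow> complex mat) \<Rightarrow> bool" where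
  "real_linear_on_H0 n m \<phi> \<longleftrightarrow>
     (\<forall>A \<in> H0 n. \<phi> A \<in> carrier_mat m m) \<and>
     (\<forall>A \<in> H0 n. \<forall>B \<in> H0 n. \<forall>a b :: real.
        \<phi> (complex_of_real a \<cdot>\<^sub>m A + complex_of_real b \<cdot>\<^sub>m B)
          = complex_of_real a \<cdot>\<^sub>m \<phi> A + complex_of_real b \<cdot>\<^sub>m \<phi> B)"

end

theory Submission
  imports Defs
begin


lemma adj_dims[simp]: "dim_row (adj A) = dim_col A" "dim_col (adj A) = dim_row A"
  by (auto simp: adj_def)

lemma adj_index[simp]: "i < dim_col A \<Longrightarrow> j < dim_row A \<Longrightarrow> adj A $$ (i,j) = cnj (A $$ (j,i))"
  unfolding adj_def by simp

lemma adj_carrier[simp]: "A \<in> carrier_mat r c \<Longrightarrow> adj A \<in> carrier_mat c r"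
  unfolding carrier_mat_def by simp

lemma adj_adj[simp]: "adj (adj A) = A"
  by (intro eq_matI) simp_all

lemma adj_mult: "dim_col A = dim_row B \<Longrightarrow> adj (A * B) = adj B * adj A"
  by (intro eq_matI) (simp_all add: scalar_prod_def mult.commute)

lemma adj_add: "dim_row A = dim_row B \<Longrightarrow> dim_col A = dim_col B \<Longrightarrow> adj (A + B) = adj A + adj B"
  by (intro eq_matI) simp_all

lemma adj_uminus: "adj (- A) = - adj A"
  by (intro eq_matI) simp_all

lemma adj_smult: "adj (c \<cdot>\<^sub>m A) = cnj c \<cdot>\<^sub>m adj A"
  by (intro eq_matI) simp_all

lemma adj_zero[simp]: "adj (0\<^sub>m r c) = 0\<^sub>m c r"
  by (intro eq_matI) simp_all

lemma adj_one[simp]: "adj (1\<^sub>m n) = 1\<^sub>m n"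
  by (intro eq_matI) simp_all

lemma adj_four_block:
  assumes "A \<in> carrier_mat r1 c1" "B \<in> carrier_mat r1 c2" "C \<in> carrier_mat r2 c1" "D \<in> carrier_mat r2 c2"
  shows "adj (four_block_mat A B C D) = four_block_mat (adj A) (adj C) (adj B) (adj D)"
proof -
  have d: "dim_row A = r1" "dim_col A = c1" "dim_row B = r1" "dim_col B = c2"
     "dim_row C = r2" "dim_col C = c1" "dim_row D = r2" "dim_col D = c2"
    using assms by auto
  show ?thesis
    by (rule eq_matI) (simp_all add: d)
qed

lemma four_block_inj:
  assumes "four_block_mat A B C D = four_block_mat A' B' C' D'"
   "A \<in> carrier_mat r1 c1" "B \<in> carrier_mat r1 c2" "C \<in> carrier_mat r2 c1" "D \<in> carrier_mat r2 c2"
   "A' \<in> carrier_mat r1 c1" "B' \<in> carrier_mat r1 c2" "C' \<in> carrier_mat r2 c1" "D' \<in> carrier_mat r2 c2"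
  shows "A = A' \<and> B = B' \<and> C = C' \<and> D = D'"
proof -
  have d: "dim_row A = r1" "dim_col A = c1" "dim_row B = r1" "dim_col B = c2"
     "dim_row C = r2" "dim_col C = c1" "dim_row D = r2" "dim_col D = c2"
    "dim_row A' = r1" "dim_col A' = c1" "dim_row B' = r1" "dim_col B' = c2"
     "dim_row C' = r2" "dim_col C' = c1" "dim_row D' = r2" "dim_col D' = c2"
    using assms by auto
  have e: "\<And>i j. i < r1 + r2 \<Longrightarrow> j < c1 + c2 \<Longrightarrow> four_block_mat A B C D $$ (i,j) = four_block_mat A' B' C' D' $$ (i,j)"
    using assms(1) by simp
  show ?thesis
  proof (intro conjI eq_matI)
    fix i j assume "i < dim_row A'" "j < dim_col A'"
    then show "A $$ (i,j) = A' $$ (i,j)" using e[of i j] by (simp add: d)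
  next
    fix i j assume "i < dim_row B'" "j < dim_col B'"
    then show "B $$ (i,j) = B' $$ (i,j)" using e[of i "j + c1"] by (simp add: d)
  next
    fix i j assume "i < dim_row C'" "j < dim_col C'"
    then show "C $$ (i,j) = C' $$ (i,j)" using e[of "i + r1" j] by (simp add: d)
  next
    fix i j assume "i < dim_row D'" "j < dim_col D'"
    then show "D $$ (i,j) = D' $$ (i,j)" using e[of "i + r1" "j + c1"] by (simp add: d)
  qed (simp_all add: d)
qed

lemma sum_lessThan_add_split:
  "sum f {..<a+(b::nat)} = sum f {..<a} + sum (\<lambda>l. f (l + a)) {..<b}"
  by (induction b) (simp_all add: ac_simps)

lemma mtrace_mult_expand: "mtrace (A * B) = (\<Sum>i<dim_row A. \<Sum>l<dim_row B. A $$ (i,l) * B $$ (l,i))"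
  if "dim_col A = dim_row B" "dim_col B = dim_row A"
  unfolding mtrace_def
  by (intro sum.cong) (simp_all add: that scalar_prod_def atLeast0LessThan)

lemma mtrace_mult: "dim_col A = dim_row B \<Longrightarrow> dim_col B = dim_row A \<Longrightarrow> mtrace (A * B) = mtrace (B * A)"
  apply (simp add: mtrace_mult_expand)
  apply (subst sum.swap)
  apply (simp add: mult.commute)
  done

lemma mtrace_four_block:
  assumes "A \<in> carrier_mat r1 r1" "D \<in> carrier_mat r2 r2" "B \<in> carrier_mat r1 r2" "C \<in> carrier_mat r2 r1"
  shows "mtrace (four_block_mat A B C D) = mtrace A + mtrace D"
proof -
  have d: "dim_row A = r1" "dim_col A = r1" "dim_row B = r1" "dim_col B = r2"
     "dim_row C = r2" "dim_col C = r1" "dim_row D = r2" "dim_col D = r2"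
    using assms by auto
  show ?thesis
    unfolding mtrace_def
    by (simp add: d sum_lessThan_add_split)
qed

lemma mtrace_add: "dim_row A = dim_row B \<Longrightarrow> dim_col A = dim_col B \<Longrightarrow> dim_row A = dim_col A \<Longrightarrow>
  mtrace (A + B) = mtrace A + mtrace B"
  unfolding mtrace_def by (simp add: sum.distrib)

lemma mtrace_smult: "dim_row A = dim_col A \<Longrightarrow> mtrace (c \<cdot>\<^sub>m A) = c * mtrace A"
  unfolding mtrace_def by (simp add: sum_distrib_left)

lemma mtrace_uminus: "dim_row A = dim_col A \<Longrightarrow> mtrace (- A) = - mtrace A"
  unfolding mtrace_def by (simp add: sum_negf)

lemma mtrace_zero[simp]: "mtrace (0\<^sub>m n n) = 0"
  unfolding mtrace_def by simp



lemma assoc': "dim_col A = dim_row B \<Longrightarrow> dim_col B = dim_row C \<Longrightarrow> (A::complex mat) * B * C = A * (B * C)"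
  by (rule assoc_mult_mat[of A "dim_row A" "dim_col A" B "dim_col B" C "dim_col C"]) auto

lemma canc1: "A * B = 1\<^sub>m n \<Longrightarrow> dim_col A = dim_row B \<Longrightarrow> dim_row X = dim_col B \<Longrightarrow> (A::complex mat) * (B * X) = X"
proof -
  assume a: "A * B = 1\<^sub>m n" "dim_col A = dim_row B" "dim_row X = dim_col B"
  have "A * (B * X) = (A * B) * X" by (rule assoc'[symmetric]) (use a in auto)
  also have "\<dots> = X" using a(1) a(3) by (metis index_mult_mat(3) index_one_mat(3) left_mult_one_mat')
  finally show ?thesis .
qed

lemma canc0: "A * B = 0\<^sub>m r c \<Longrightarrow> dim_col A = dim_row B \<Longrightarrow> dim_row X = dim_col B \<Longrightarrow> (A::complex mat) * (B * X) = 0\<^sub>m r (dim_col X)"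
proof -
  assume a: "A * B = 0\<^sub>m r c" "dim_col A = dim_row B" "dim_row X = dim_col B"
  have "A * (B * X) = (A * B) * X" by (rule assoc'[symmetric]) (use a in auto)
  also have "\<dots> = 0\<^sub>m r (dim_col X)" using a(1) a(3) by (metis index_mult_mat(3) index_zero_mat(3) left_mult_zero_mat')
  finally show ?thesis .
qed

lemma addz_l[simp]: "dim_row A = r \<Longrightarrow> dim_col A = c \<Longrightarrow> 0\<^sub>m r c + (A::complex mat) = A"
  by (intro eq_matI) auto
lemma addz_r[simp]: "dim_row A = r \<Longrightarrow> dim_col A = c \<Longrightarrow> (A::complex mat) + 0\<^sub>m r c = A"
  by (intro eq_matI) auto
lemma add_neg_r: "(A::complex mat) + - A = 0\<^sub>m (dim_row A) (dim_col A)"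
  by (intro eq_matI) auto
lemma add_neg_l: "- (A::complex mat) + A = 0\<^sub>m (dim_row A) (dim_col A)"
  by (intro eq_matI) auto
lemma neg_neg[simp]: "- (- (A::complex mat)) = A"
  by (intro eq_matI) auto

lemma sum_expand3:
  fixes x y :: complex
  shows "(\<Sum>l\<in>S. (f1 l + x * f2 l + y * f3 l) * (g1 l + x * g2 l + y * g3 l)) =
    (\<Sum>l\<in>S. f1 l * g1 l) + x * ((\<Sum>l\<in>S. f1 l * g2 l) + (\<Sum>l\<in>S. f2 l * g1 l))
    + y * ((\<Sum>l\<in>S. f1 l * g3 l) + (\<Sum>l\<in>S. f3 l * g1 l))
    + x * x * (\<Sum>l\<in>S. f2 l * g2 l) + y * y * (\<Sum>l\<in>S. f3 l * g3 l)
    + x * y * ((\<Sum>l\<in>S. f2 l * g3 l) + (\<Sum>l\<in>S. f3 l * g2 l))"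
  by (simp add: algebra_simps sum.distrib sum_distrib_left)

lemma mat_expand:
  fixes x y :: complex
  assumes "X1 \<in> carrier_mat n n" "X2 \<in> carrier_mat n n" "X3 \<in> carrier_mat n n"
    "Y1 \<in> carrier_mat n n" "Y2 \<in> carrier_mat n n" "Y3 \<in> carrier_mat n n"
  shows "(X1 + x \<cdot>\<^sub>m X2 + y \<cdot>\<^sub>m X3) * (Y1 + x \<cdot>\<^sub>m Y2 + y \<cdot>\<^sub>m Y3) =
    X1 * Y1 + x \<cdot>\<^sub>m (X1 * Y2 + X2 * Y1) + y \<cdot>\<^sub>m (X1 * Y3 + X3 * Y1)
    + (x * x) \<cdot>\<^sub>m (X2 * Y2) + (y * y) \<cdot>\<^sub>m (X3 * Y3) + (x * y) \<cdot>\<^sub>m (X2 * Y3 + X3 * Y2)"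
proof -
  have d: "dim_row X1 = n" "dim_col X1 = n" "dim_row X2 = n" "dim_col X2 = n" "dim_row X3 = n" "dim_col X3 = n"
    "dim_row Y1 = n" "dim_col Y1 = n" "dim_row Y2 = n" "dim_col Y2 = n" "dim_row Y3 = n" "dim_col Y3 = n"
    using assms by auto
  show ?thesis
  proof (rule eq_matI)
    fix i j assume ij: "i < dim_row (X1 * Y1 + x \<cdot>\<^sub>m (X1 * Y2 + X2 * Y1) + y \<cdot>\<^sub>m (X1 * Y3 + X3 * Y1)
    + (x * x) \<cdot>\<^sub>m (X2 * Y2) + (y * y) \<cdot>\<^sub>m (X3 * Y3) + (x * y) \<cdot>\<^sub>m (X2 * Y3 + X3 * Y2))"
      "j < dim_col (X1 * Y1 + x \<cdot>\<^sub>m (X1 * Y2 + X2 * Y1) + y \<cdot>\<^sub>m (X1 * Y3 + X3 * Y1)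
    + (x * x) \<cdot>\<^sub>m (X2 * Y2) + (y * y) \<cdot>\<^sub>m (X3 * Y3) + (x * y) \<cdot>\<^sub>m (X2 * Y3 + X3 * Y2))"
    then have i: "i < n" and j: "j < n" by (simp_all add: d)
    have "((X1 + x \<cdot>\<^sub>m X2 + y \<cdot>\<^sub>m X3) * (Y1 + x \<cdot>\<^sub>m Y2 + y \<cdot>\<^sub>m Y3)) $$ (i,j)
      = (\<Sum>l\<in>{0..<n}. (X1 $$ (i,l) + x * X2 $$ (i,l) + y * X3 $$ (i,l)) * (Y1 $$ (l,j) + x * Y2 $$ (l,j) + y * Y3 $$ (l,j)))"
      using i j by (simp add: d scalar_prod_def)
    also have "\<dots> = (X1 * Y1 + x \<cdot>\<^sub>m (X1 * Y2 + X2 * Y1) + y \<cdot>\<^sub>m (X1 * Y3 + X3 * Y1)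
    + (x * x) \<cdot>\<^sub>m (X2 * Y2) + (y * y) \<cdot>\<^sub>m (X3 * Y3) + (x * y) \<cdot>\<^sub>m (X2 * Y3 + X3 * Y2)) $$ (i,j)"
      unfolding sum_expand3 using i j by (simp add: d scalar_prod_def)
    finally show "((X1 + x \<cdot>\<^sub>m X2 + y \<cdot>\<^sub>m X3) * (Y1 + x \<cdot>\<^sub>m Y2 + y \<cdot>\<^sub>m Y3)) $$ (i,j) = 
     (X1 * Y1 + x \<cdot>\<^sub>m (X1 * Y2 + X2 * Y1) + y \<cdot>\<^sub>m (X1 * Y3 + X3 * Y1)
    + (x * x) \<cdot>\<^sub>m (X2 * Y2) + (y * y) \<cdot>\<^sub>m (X3 * Y3) + (x * y) \<cdot>\<^sub>m (X2 * Y3 + X3 * Y2)) $$ (i,j)" .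
  qed (simp_all add: d)
qed

lemma adj_comb:
  assumes "X1 \<in> carrier_mat n n" "X2 \<in> carrier_mat n n" "X3 \<in> carrier_mat n n"
  shows "adj (X1 + complex_of_real x \<cdot>\<^sub>m X2 + complex_of_real y \<cdot>\<^sub>m X3)
     = adj X1 + complex_of_real x \<cdot>\<^sub>m adj X2 + complex_of_real y \<cdot>\<^sub>m adj X3"
proof -
  have d: "dim_row X1 = n" "dim_col X1 = n" "dim_row X2 = n" "dim_col X2 = n" "dim_row X3 = n" "dim_col X3 = n"
    using assms by auto
  show ?thesis by (rule eq_matI) (simp_all add: d)
qed

lemma scal:
  fixes aa s1 s2 s3 bb cc d :: complex
  assumes e: "\<And>x y :: real. (x,y) \<in> {(1,0),(-1,0),(0,1),(0,-1),(3/5,4/5)} \<Longrightarrow>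
     aa + complex_of_real x * s1 + complex_of_real y * s2 + (complex_of_real x * complex_of_real x) * bb
     + (complex_of_real y * complex_of_real y) * cc + (complex_of_real x * complex_of_real y) * s3 = d"
  shows "cc = bb" "bb = d - aa" "s3 = 0"
proof -
  have e1: "aa + s1 + bb = d" using e[of 1 0] by simp
  have e2: "aa - s1 + bb = d" using e[of "-1" 0] by simp
  have e3: "aa + s2 + cc = d" using e[of 0 1] by simp
  have e4: "aa - s2 + cc = d" using e[of 0 "-1"] by simp
  have e5: "aa + 3/5 * s1 + 4/5 * s2 + 9/25 * bb + 16/25 * cc + 12/25 * s3 = d"
    using e[of "3/5" "4/5"] by (simp add: field_simps)
  have "(aa + s1 + bb) - (aa - s1 + bb) = s1 + s1" by (simp add: algebra_simps)
  then have "s1 + s1 = 0" using e1 e2 by simp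
  then have s1: "s1 = 0" by (metis mult_2 mult_eq_0_iff zero_neq_numeral)
  have "(aa + s2 + cc) - (aa - s2 + cc) = s2 + s2" by (simp add: algebra_simps)
  then have "s2 + s2 = 0" using e3 e4 by simp
  then have s2: "s2 = 0" by (metis mult_2 mult_eq_0_iff zero_neq_numeral)
  have b: "bb = d - aa" using e1 s1 by (metis add_0_right add_diff_cancel_left')
  have c: "cc = d - aa" using e3 s2 by (metis add_0_right add_diff_cancel_left')
  show "bb = d - aa" by (rule b)
  show "cc = bb" using b c by simp
  have "12/25 * s3 = (aa + 3/5 * s1 + 4/5 * s2 + 9/25 * bb + 16/25 * cc + 12/25 * s3) - aa - 3/5 * s1 - 4/5 * s2 - 9/25 * bb - 16/25 * cc"
    by (simp add: algebra_simps)
  also have "\<dots> = d - aa - 3/5 * s1 - 4/5 * s2 - 9/25 * bb - 16/25 * cc" by (simp only: e5)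
  also have "\<dots> = d - aa - 9/25 * (d - aa) - 16/25 * (d - aa)" by (simp add: s1 s2 b c)
  also have "\<dots> = 0" by (simp add: field_simps)
  finally show "s3 = 0" by simp
qed

lemma hcat_block:
  assumes "V \<in> carrier_mat n p" "T \<in> carrier_mat n q"
  shows "hcat V T = four_block_mat V T (0\<^sub>m 0 p) (0\<^sub>m 0 q)"
proof -
  have d: "dim_row V = n" "dim_col V = p" "dim_row T = n" "dim_col T = q" using assms by auto
  show ?thesis by (rule eq_matI) (simp_all add: hcat_def d)
qed

lemma one0: "1\<^sub>m 0 = (0\<^sub>m 0 0 :: complex mat)"
  by (rule eq_matI) auto

lemma unitary_blocks:
  assumes V: "V \<in> carrier_mat (p+2) p" and T: "T \<in> carrier_mat (p+2) 2"
    and U: "unitary_mat (p+2) (hcat V T)"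
  shows "adj V * V = 1\<^sub>m p" "adj V * T = 0\<^sub>m p 2" "adj T * V = 0\<^sub>m 2 p" "adj T * T = 1\<^sub>m 2"
    "V * adj V + T * adj T = 1\<^sub>m (p+2)"
proof -
  have d: "dim_row V = p+2" "dim_col V = p" "dim_row T = p+2" "dim_col T = 2" using V T by auto
  note z = zero_carrier_mat
  have cV: "adj V \<in> carrier_mat p (p+2)" and cT: "adj T \<in> carrier_mat 2 (p+2)" using V T by auto
  have W: "hcat V T = four_block_mat V T (0\<^sub>m 0 p) (0\<^sub>m 0 2)" by (rule hcat_block[OF V T])
  have aW: "adj (four_block_mat V T (0\<^sub>m 0 p) (0\<^sub>m 0 2)) = four_block_mat (adj V) (0\<^sub>m p 0) (adj T) (0\<^sub>m 2 0)"
    by (subst adj_four_block[OF V T z[of 0 p] z[of 0 2]]) simp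
  have u1: "adj (hcat V T) * hcat V T = 1\<^sub>m (p+2)" and u2: "hcat V T * adj (hcat V T) = 1\<^sub>m (p+2)"
    using U unfolding unitary_mat_def by auto
  have "adj (hcat V T) * hcat V T = four_block_mat (adj V * V + 0\<^sub>m p 0 * 0\<^sub>m 0 p) (adj V * T + 0\<^sub>m p 0 * 0\<^sub>m 0 2)
     (adj T * V + 0\<^sub>m 2 0 * 0\<^sub>m 0 p) (adj T * T + 0\<^sub>m 2 0 * 0\<^sub>m 0 2)"
    unfolding W aW by (rule mult_four_block_mat[OF cV z[of p 0] cT z[of 2 0] V T z[of 0 p] z[of 0 2]])
  also have "\<dots> = four_block_mat (adj V * V) (adj V * T) (adj T * V) (adj T * T)"
    by (simp add: d)
  finally have e1: "adj (hcat V T) * hcat V T = four_block_mat (adj V * V) (adj V * T) (adj T * V) (adj T * T)" .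
  have "four_block_mat (adj V * V) (adj V * T) (adj T * V) (adj T * T) = adj (hcat V T) * hcat V T"
    using e1 by (rule sym)
  also have "\<dots> = 1\<^sub>m (p+2)" by (rule u1)
  also have "\<dots> = four_block_mat (1\<^sub>m p) (0\<^sub>m p 2) (0\<^sub>m 2 p) (1\<^sub>m 2)" by (rule four_block_one_mat[symmetric])
  finally have "four_block_mat (adj V * V) (adj V * T) (adj T * V) (adj T * T) = four_block_mat (1\<^sub>m p) (0\<^sub>m p 2) (0\<^sub>m 2 p) (1\<^sub>m 2)" .
  moreover have cs: "adj V * V \<in> carrier_mat p p" "adj V * T \<in> carrier_mat p 2"
    "adj T * V \<in> carrier_mat 2 p" "adj T * T \<in> carrier_mat 2 2"
    using cV cT V T by (meson mult_carrier_mat)+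
  ultimately have cj: "adj V * V = 1\<^sub>m p \<and> adj V * T = 0\<^sub>m p 2 \<and> adj T * V = 0\<^sub>m 2 p \<and> adj T * T = 1\<^sub>m 2"
    by (intro four_block_inj[of _ _ _ _ _ _ _ _ p p 2 2]) auto
  show "adj V * V = 1\<^sub>m p" using cj by blast
  show "adj V * T = 0\<^sub>m p 2" using cj by blast
  show "adj T * V = 0\<^sub>m 2 p" using cj by blast
  show "adj T * T = 1\<^sub>m 2" using cj by blast
  have "hcat V T * adj (hcat V T) = four_block_mat (V * adj V + T * adj T) (V * 0\<^sub>m p 0 + T * 0\<^sub>m 2 0)
     (0\<^sub>m 0 p * adj V + 0\<^sub>m 0 2 * adj T) (0\<^sub>m 0 p * 0\<^sub>m p 0 + 0\<^sub>m 0 2 * 0\<^sub>m 2 0)"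
    unfolding W aW by (rule mult_four_block_mat[OF V T z[of 0 p] z[of 0 2] cV z[of p 0] cT z[of 2 0]])
  also have "\<dots> = four_block_mat (V * adj V + T * adj T) (0\<^sub>m (p+2) 0) (0\<^sub>m 0 (p+2)) (1\<^sub>m 0)"
    by (rule cong_four_block_mat) (simp_all add: d one0)
  finally have e2: "hcat V T * adj (hcat V T) = four_block_mat (V * adj V + T * adj T) (0\<^sub>m (p+2) 0) (0\<^sub>m 0 (p+2)) (1\<^sub>m 0)" .
  have "four_block_mat (V * adj V + T * adj T) (0\<^sub>m (p+2) 0) (0\<^sub>m 0 (p+2)) (1\<^sub>m 0) = hcat V T * adj (hcat V T)"
    using e2 by (rule sym)
  also have "\<dots> = 1\<^sub>m (p+2)" by (rule u2)
  also have "\<dots> = 1\<^sub>m (p+2+0)" by simp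
  also have "\<dots> = four_block_mat (1\<^sub>m (p+2)) (0\<^sub>m (p+2) 0) (0\<^sub>m 0 (p+2)) (1\<^sub>m 0)" by (rule four_block_one_mat[symmetric])
  finally have e3: "four_block_mat (V * adj V + T * adj T) (0\<^sub>m (p+2) 0) (0\<^sub>m 0 (p+2)) (1\<^sub>m 0)
     = four_block_mat (1\<^sub>m (p+2)) (0\<^sub>m (p+2) 0) (0\<^sub>m 0 (p+2)) (1\<^sub>m 0)" .
  have cs2: "V * adj V + T * adj T \<in> carrier_mat (p+2) (p+2)"
    using cV cT V T by (meson add_carrier_mat mult_carrier_mat)
  have "V * adj V + T * adj T = 1\<^sub>m (p+2) \<and> 0\<^sub>m (p+2) 0 = 0\<^sub>m (p+2) 0 \<and> 0\<^sub>m 0 (p+2) = 0\<^sub>m 0 (p+2) \<and> 1\<^sub>m 0 = (1\<^sub>m 0 :: complex mat)"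
    using four_block_inj[OF e3 cs2 zero_carrier_mat zero_carrier_mat one_carrier_mat one_carrier_mat zero_carrier_mat zero_carrier_mat one_carrier_mat] by blast
  then show "V * adj V + T * adj T = 1\<^sub>m (p+2)" by blast
qed


lemma block_facts:
  fixes H K Z T V :: "complex mat"
  assumes H: "H \<in> IH0 p"
    and K: "hermitian_mat 2 K" "unitary_mat 2 K"
    and Z: "unitary_mat 2 Z"
    and T: "T \<in> carrier_mat (p+2) 2"
    and V: "V \<in> carrier_mat (p+2) p"
    and VT: "unitary_mat (p+2) (hcat V T)"
  defines "A \<equiv> dsum (V * H * adj V) (0\<^sub>m 2 2)"
    and "B \<equiv> dsum (T * K * adj T) (- (adj Z * K * Z))"
    and "C \<equiv> four_block_mat (0\<^sub>m (p+2) (p+2)) (T * Z) (adj Z * adj T) (0\<^sub>m 2 2)"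
  shows "A \<in> H0 (p+2+2)" "B \<in> H0 (p+2+2)" "C \<in> H0 (p+2+2)"
    "A * A + B * B = 1\<^sub>m (p+2+2)" "C * C = B * B"
    "A * B = 0\<^sub>m (p+2+2) (p+2+2)" "B * A = 0\<^sub>m (p+2+2) (p+2+2)"
    "A * C = 0\<^sub>m (p+2+2) (p+2+2)" "C * A = 0\<^sub>m (p+2+2) (p+2+2)"
    "B * C + C * B = 0\<^sub>m (p+2+2) (p+2+2)"
proof -
  note ub = unitary_blocks[OF V T VT]
  have Hc: "H \<in> carrier_mat p p" and Hh: "adj H = H" and Hu: "adj H * H = 1\<^sub>m p" and Htr: "mtrace H = 0"
    using H unfolding IH0_def H0_def hermitian_mat_def unitary_mat_def by auto
  have Kc: "K \<in> carrier_mat 2 2" and Kh: "adj K = K" and Ku: "adj K * K = 1\<^sub>m 2"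
    using K unfolding hermitian_mat_def unitary_mat_def by auto
  have Zc: "Z \<in> carrier_mat 2 2" and Zu1: "adj Z * Z = 1\<^sub>m 2" and Zu2: "Z * adj Z = 1\<^sub>m 2"
    using Z unfolding unitary_mat_def by auto
  have HH: "H * H = 1\<^sub>m p" using Hu Hh by simp
  have KK: "K * K = 1\<^sub>m 2" using Ku Kh by simp
  have d: "dim_row V = p+2" "dim_col V = p" "dim_row T = p+2" "dim_col T = 2"
    "dim_row H = p" "dim_col H = p" "dim_row K = 2" "dim_col K = 2" "dim_row Z = 2" "dim_col Z = 2"
    using V T Hc Kc Zc by auto
  note c1 = canc1[OF ub(1)] canc1[OF ub(4)] canc1[OF HH] canc1[OF KK] canc1[OF Zu1] canc1[OF Zu2]
  note c0 = canc0[OF ub(2)] canc0[OF ub(3)]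
  note rw = d assoc' c1 c0 ub(1-4) HH KK Zu1 Zu2
  define P where "P = V * H * adj V"
  define Q where "Q = T * K * adj T"
  define R where "R = - (adj Z * K * Z)"
  define S where "S = T * Z"
  define S' where "S' = adj Z * adj T"
  have dP: "dim_row P = p+2" "dim_col P = p+2" "dim_row Q = p+2" "dim_col Q = p+2"
    "dim_row R = 2" "dim_col R = 2" "dim_row S = p+2" "dim_col S = 2" "dim_row S' = 2" "dim_col S' = p+2"
    by (simp_all add: P_def Q_def R_def S_def S'_def d)
  have cP: "P \<in> carrier_mat (p+2) (p+2)" "Q \<in> carrier_mat (p+2) (p+2)" "R \<in> carrier_mat 2 2"
     "S \<in> carrier_mat (p+2) 2" "S' \<in> carrier_mat 2 (p+2)"
    by (simp_all add: carrier_matI dP)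
  have Ad: "A = four_block_mat P (0\<^sub>m (p+2) 2) (0\<^sub>m 2 (p+2)) (0\<^sub>m 2 2)"
    unfolding A_def dsum_def P_def by (simp add: d)
  have Bd: "B = four_block_mat Q (0\<^sub>m (p+2) 2) (0\<^sub>m 2 (p+2)) R"
    unfolding B_def dsum_def Q_def R_def by (simp add: d)
  have Cd: "C = four_block_mat (0\<^sub>m (p+2) (p+2)) S S' (0\<^sub>m 2 2)"
    unfolding C_def S_def S'_def by simp
  have PP: "P * P = V * adj V" unfolding P_def by (simp add: rw)
  have QQ: "Q * Q = T * adj T" unfolding Q_def by (simp add: rw)
  have RR: "R * R = 1\<^sub>m 2" unfolding R_def by (simp add: rw)
  have SS: "S * S' = T * adj T" unfolding S_def S'_def by (simp add: rw)
  have SS': "S' * S = 1\<^sub>m 2" unfolding S_def S'_def by (simp add: rw)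
  have PQ: "P * Q = 0\<^sub>m (p+2) (p+2)" unfolding P_def Q_def by (simp add: rw)
  have QP: "Q * P = 0\<^sub>m (p+2) (p+2)" unfolding P_def Q_def by (simp add: rw)
  have PS: "P * S = 0\<^sub>m (p+2) 2" unfolding P_def S_def by (simp add: rw)
  have SP: "S' * P = 0\<^sub>m 2 (p+2)" unfolding P_def S'_def by (simp add: rw)
  have QS: "Q * S + S * R = 0\<^sub>m (p+2) 2" unfolding Q_def S_def R_def by (simp add: rw add_neg_r)
  have RS: "R * S' + S' * Q = 0\<^sub>m 2 (p+2)" unfolding Q_def S'_def R_def by (simp add: rw add_neg_l)
  note z = zero_carrier_mat
  have AA: "A * A = four_block_mat (V * adj V) (0\<^sub>m (p+2) 2) (0\<^sub>m 2 (p+2)) (0\<^sub>m 2 2)"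
    unfolding Ad mult_four_block_mat[OF cP(1) z z z cP(1) z z z] by (simp add: dP PP d)
  have BB: "B * B = four_block_mat (T * adj T) (0\<^sub>m (p+2) 2) (0\<^sub>m 2 (p+2)) (1\<^sub>m 2)"
    unfolding Bd mult_four_block_mat[OF cP(2) z z cP(3) cP(2) z z cP(3)] by (simp add: dP QQ RR d)
  have CC: "C * C = four_block_mat (T * adj T) (0\<^sub>m (p+2) 2) (0\<^sub>m 2 (p+2)) (1\<^sub>m 2)"
    unfolding Cd mult_four_block_mat[OF z cP(4) cP(5) z z cP(4) cP(5) z] by (simp add: dP SS SS' d)
  show "C * C = B * B" using BB CC by simp
  show "A * A + B * B = 1\<^sub>m (p+2+2)"
    unfolding AA BB
    by (subst add_four_block_mat[of _ "p+2" "p+2" _ 2 _ 2]) (simp_all add: d ub(5) carrier_matI)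
  show "A * B = 0\<^sub>m (p+2+2) (p+2+2)"
    unfolding Ad Bd mult_four_block_mat[OF cP(1) z z z cP(2) z z cP(3)] by (simp add: dP PQ)
  show "B * A = 0\<^sub>m (p+2+2) (p+2+2)"
    unfolding Ad Bd mult_four_block_mat[OF cP(2) z z cP(3) cP(1) z z z] by (simp add: dP QP)
  show "A * C = 0\<^sub>m (p+2+2) (p+2+2)"
    unfolding Ad Cd mult_four_block_mat[OF cP(1) z z z z cP(4) cP(5) z] by (simp add: dP PS)
  show "C * A = 0\<^sub>m (p+2+2) (p+2+2)"
    unfolding Ad Cd mult_four_block_mat[OF z cP(4) cP(5) z cP(1) z z z] by (simp add: dP SP)
  have BC: "B * C = four_block_mat (0\<^sub>m (p+2) (p+2)) (Q * S) (R * S') (0\<^sub>m 2 2)"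
    unfolding Bd Cd mult_four_block_mat[OF cP(2) z z cP(3) z cP(4) cP(5) z] by (simp add: dP)
  have CB: "C * B = four_block_mat (0\<^sub>m (p+2) (p+2)) (S * R) (S' * Q) (0\<^sub>m 2 2)"
    unfolding Bd Cd mult_four_block_mat[OF z cP(4) cP(5) z cP(2) z z cP(3)] by (simp add: dP)
  show "B * C + C * B = 0\<^sub>m (p+2+2) (p+2+2)"
    unfolding BC CB
    by (subst add_four_block_mat[of _ "p+2" "p+2" _ 2 _ 2]) (simp_all add: dP QS RS carrier_matI)
  have aP: "adj P = P" unfolding P_def by (simp add: d adj_mult Hh assoc')
  have aQ: "adj Q = Q" unfolding Q_def by (simp add: d adj_mult Kh assoc')
  have aR: "adj R = R" unfolding R_def by (simp add: d adj_mult Kh assoc' adj_uminus)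
  have aS: "adj S = S'" unfolding S_def S'_def by (simp add: d adj_mult)
  have aS': "adj S' = S" unfolding S_def S'_def by (simp add: d adj_mult)
  have tP: "mtrace P = 0"
  proof -
    have "mtrace P = mtrace (V * (H * adj V))" unfolding P_def by (simp add: d assoc')
    also have "\<dots> = mtrace ((H * adj V) * V)" by (rule mtrace_mult) (simp_all add: d)
    also have "\<dots> = mtrace H" by (simp add: rw)
    finally show ?thesis using Htr by simp
  qed
  have tQ: "mtrace Q = mtrace K"
  proof -
    have "mtrace Q = mtrace (T * (K * adj T))" unfolding Q_def by (simp add: d assoc')
    also have "\<dots> = mtrace ((K * adj T) * T)" by (rule mtrace_mult) (simp_all add: d)
    also have "\<dots> = mtrace K" by (simp add: rw)
    finally show ?thesis .
  qed
  have tR: "mtrace R = - mtrace K"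
  proof -
    have "mtrace R = - mtrace (adj Z * (K * Z))" unfolding R_def by (simp add: d assoc' mtrace_uminus)
    also have "mtrace (adj Z * (K * Z)) = mtrace ((K * Z) * adj Z)" by (rule mtrace_mult) (simp_all add: d)
    also have "\<dots> = mtrace K" by (simp add: rw)
    finally show ?thesis .
  qed
  have hA: "adj A = A" unfolding Ad adj_four_block[OF cP(1) z z z] aP by simp
  have hB: "adj B = B" unfolding Bd adj_four_block[OF cP(2) z z cP(3)] aQ aR by simp
  have hC: "adj C = C" unfolding Cd adj_four_block[OF z cP(4) cP(5) z] aS aS' by simp
  have trA: "mtrace A = 0" unfolding Ad mtrace_four_block[OF cP(1) z z z] tP by simp
  have trB: "mtrace B = 0" unfolding Bd mtrace_four_block[OF cP(2) cP(3) z z] tQ tR by simp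
  have trC: "mtrace C = 0" unfolding Cd mtrace_four_block[OF z z cP(4) cP(5)] by simp
  have cA: "A \<in> carrier_mat (p+2+2) (p+2+2)" unfolding Ad by (simp add: carrier_matI dP)
  have cB: "B \<in> carrier_mat (p+2+2) (p+2+2)" unfolding Bd by (simp add: carrier_matI dP)
  have cC: "C \<in> carrier_mat (p+2+2) (p+2+2)" unfolding Cd by (simp add: carrier_matI dP)
  show "A \<in> H0 (p+2+2)" unfolding H0_def hermitian_mat_def using hA trA cA by simp
  show "B \<in> H0 (p+2+2)" unfolding H0_def hermitian_mat_def using hB trB cB by simp
  show "C \<in> H0 (p+2+2)" unfolding H0_def hermitian_mat_def using hC trC cC by simp
qed


lemma H0_facts: "A \<in> H0 n \<Longrightarrow> A \<in> carrier_mat n n \<and> adj A = A \<and> mtrace A = 0"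
  unfolding H0_def hermitian_mat_def by simp

lemma H0_comb:
  assumes "B \<in> H0 n" "C \<in> H0 n"
  shows "complex_of_real x \<cdot>\<^sub>m B + complex_of_real y \<cdot>\<^sub>m C \<in> H0 n"
proof -
  have cB: "B \<in> carrier_mat n n" and hB: "adj B = B" and tB: "mtrace B = 0" using H0_facts[OF assms(1)] by auto
  have cC: "C \<in> carrier_mat n n" and hC: "adj C = C" and tC: "mtrace C = 0" using H0_facts[OF assms(2)] by auto
  have d: "dim_row B = n" "dim_col B = n" "dim_row C = n" "dim_col C = n" using cB cC by auto
  have c: "complex_of_real x \<cdot>\<^sub>m B + complex_of_real y \<cdot>\<^sub>m C \<in> carrier_mat n n"
    by (simp add: carrier_matI d)
  have h: "adj (complex_of_real x \<cdot>\<^sub>m B + complex_of_real y \<cdot>\<^sub>m C) = complex_of_real x \<cdot>\<^sub>m B + complex_of_real y \<cdot>\<^sub>m C"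
    by (simp add: adj_add adj_smult hB hC d)
  have t: "mtrace (complex_of_real x \<cdot>\<^sub>m B + complex_of_real y \<cdot>\<^sub>m C) = 0"
    by (simp add: mtrace_add mtrace_smult tB tC d)
  show ?thesis unfolding H0_def hermitian_mat_def using c h t by simp
qed

lemma comb_IH0:
  fixes x y :: real
  assumes A: "A \<in> H0 n" and B: "B \<in> H0 n" and C: "C \<in> H0 n"
    and AABB: "A * A + B * B = 1\<^sub>m n" and CC: "C * C = B * B"
    and AB: "A * B = 0\<^sub>m n n" and BA: "B * A = 0\<^sub>m n n" and AC: "A * C = 0\<^sub>m n n" and CA: "C * A = 0\<^sub>m n n"
    and BC: "B * C + C * B = 0\<^sub>m n n"
    and xy: "x * x + y * y = 1"
  shows "A + complex_of_real x \<cdot>\<^sub>m B + complex_of_real y \<cdot>\<^sub>m C \<in> IH0 n"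
proof -
  have cA: "A \<in> carrier_mat n n" and hA: "adj A = A" and tA: "mtrace A = 0" using H0_facts[OF A] by auto
  have cB: "B \<in> carrier_mat n n" and hB: "adj B = B" and tB: "mtrace B = 0" using H0_facts[OF B] by auto
  have cC: "C \<in> carrier_mat n n" and hC: "adj C = C" and tC: "mtrace C = 0" using H0_facts[OF C] by auto
  have d: "dim_row A = n" "dim_col A = n" "dim_row B = n" "dim_col B = n" "dim_row C = n" "dim_col C = n"
    using cA cB cC by auto
  define M where "M = A + complex_of_real x \<cdot>\<^sub>m B + complex_of_real y \<cdot>\<^sub>m C"
  have cM: "M \<in> carrier_mat n n" unfolding M_def by (simp add: carrier_matI d)
  have hM: "adj M = M" unfolding M_def adj_comb[OF cA cB cC] hA hB hC ..
  have tM: "mtrace M = 0" unfolding M_def by (simp add: mtrace_add mtrace_smult tA tB tC d)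
  have xy': "complex_of_real x * complex_of_real x + complex_of_real y * complex_of_real y = 1"
    by (metis xy of_real_add of_real_mult of_real_1)
  have "M * M = A * A + complex_of_real x \<cdot>\<^sub>m (A * B + B * A) + complex_of_real y \<cdot>\<^sub>m (A * C + C * A)
    + (complex_of_real x * complex_of_real x) \<cdot>\<^sub>m (B * B) + (complex_of_real y * complex_of_real y) \<cdot>\<^sub>m (C * C)
    + (complex_of_real x * complex_of_real y) \<cdot>\<^sub>m (B * C + C * B)"
    unfolding M_def by (rule mat_expand[OF cA cB cC cA cB cC])
  also have "\<dots> = 1\<^sub>m n"
  proof (rule eq_matI)
    fix i j assume "i < dim_row (1\<^sub>m n :: complex mat)" "j < dim_col (1\<^sub>m n :: complex mat)"
    then have i: "i < n" and j: "j < n" by auto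
    define a where "a = (A * A) $$ (i,j)"
    define b where "b = (B * B) $$ (i,j)"
    have "(A * A + B * B) $$ (i,j) = 1\<^sub>m n $$ (i,j)" unfolding AABB ..
    then have e: "a + b = 1\<^sub>m n $$ (i,j)" unfolding a_def b_def using i j by (simp add: d)
    have "(A * A + complex_of_real x \<cdot>\<^sub>m (A * B + B * A) + complex_of_real y \<cdot>\<^sub>m (A * C + C * A)
    + (complex_of_real x * complex_of_real x) \<cdot>\<^sub>m (B * B) + (complex_of_real y * complex_of_real y) \<cdot>\<^sub>m (C * C)
    + (complex_of_real x * complex_of_real y) \<cdot>\<^sub>m (B * C + C * B)) $$ (i,j)
      = a + (complex_of_real x * complex_of_real x) * b + (complex_of_real y * complex_of_real y) * b"
      unfolding AB BA AC CA BC CC a_def b_def using i j by (simp add: d)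
    also have "\<dots> = a + (complex_of_real x * complex_of_real x + complex_of_real y * complex_of_real y) * b"
      by (simp add: distrib_right add.assoc)
    also have "\<dots> = 1\<^sub>m n $$ (i,j)" unfolding xy' using e by simp
    finally show "(A * A + complex_of_real x \<cdot>\<^sub>m (A * B + B * A) + complex_of_real y \<cdot>\<^sub>m (A * C + C * A)
    + (complex_of_real x * complex_of_real x) \<cdot>\<^sub>m (B * B) + (complex_of_real y * complex_of_real y) \<cdot>\<^sub>m (C * C)
    + (complex_of_real x * complex_of_real y) \<cdot>\<^sub>m (B * C + C * B)) $$ (i,j) = 1\<^sub>m n $$ (i,j)" .
  qed (simp_all add: d)
  finally have MM: "M * M = 1\<^sub>m n" .
  have "unitary_mat n M" unfolding unitary_mat_def using cM hM MM by simp
  then show ?thesis unfolding IH0_def H0_def hermitian_mat_def M_def[symmetric] using cM hM tM by simp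
qed

lemma entry_comb:
  fixes x y :: complex
  assumes "X1 \<in> carrier_mat n n" "X2 \<in> carrier_mat n n" "X3 \<in> carrier_mat n n"
     "X4 \<in> carrier_mat n n" "X5 \<in> carrier_mat n n" "X6 \<in> carrier_mat n n" "i < n" "j < n"
  shows "(X1 + x \<cdot>\<^sub>m X2 + y \<cdot>\<^sub>m X3 + (x * x) \<cdot>\<^sub>m X4 + (y * y) \<cdot>\<^sub>m X5 + (x * y) \<cdot>\<^sub>m X6) $$ (i,j)
    = X1 $$ (i,j) + x * X2 $$ (i,j) + y * X3 $$ (i,j) + (x * x) * X4 $$ (i,j) + (y * y) * X5 $$ (i,j) + (x * y) * X6 $$ (i,j)"
  using assms by simp

lemma main_p:
  fixes p m :: nat and \<phi> :: "complex mat \<Rightarrow> complex mat"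
    and H K Z T V :: "complex mat"
  assumes lin: "real_linear_on_H0 (p+2+2) m \<phi>"
    and unit: "\<forall>A \<in> IH0 (p+2+2). unitary_mat m (\<phi> A)"
    and H: "H \<in> IH0 p"
    and K: "hermitian_mat 2 K" "unitary_mat 2 K"
    and Z: "unitary_mat 2 Z"
    and T: "T \<in> carrier_mat (p+2) 2"
    and V: "V \<in> carrier_mat (p+2) p"
    and VT: "unitary_mat (p+2) (hcat V T)"
  shows "abs_sq (\<phi> (four_block_mat (0\<^sub>m (p+2) (p+2)) (T * Z) (adj Z * adj T) (0\<^sub>m 2 2)))
           = abs_sq (\<phi> (dsum (T * K * adj T) (- (adj Z * K * Z))))
       \<and> abs_sq (\<phi> (dsum (T * K * adj T) (- (adj Z * K * Z))))
           = 1\<^sub>m m - abs_sq (\<phi> (dsum (V * H * adj V) (0\<^sub>m 2 2)))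
       \<and> re_mat (adj (\<phi> (dsum (T * K * adj T) (- (adj Z * K * Z))))
                 * \<phi> (four_block_mat (0\<^sub>m (p+2) (p+2)) (T * Z) (adj Z * adj T) (0\<^sub>m 2 2)))
           = 0\<^sub>m m m"
proof -
  define A where "A = dsum (V * H * adj V) (0\<^sub>m 2 2)"
  define B where "B = dsum (T * K * adj T) (- (adj Z * K * Z))"
  define C where "C = four_block_mat (0\<^sub>m (p+2) (p+2)) (T * Z) (adj Z * adj T) (0\<^sub>m 2 2)"
  note bf = block_facts[OF H K Z T V VT, folded A_def B_def C_def]
  define n where "n = p+2+2"
  note bf' = bf[folded n_def]
  have lin1: "\<And>X. X \<in> H0 n \<Longrightarrow> \<phi> X \<in> carrier_mat m m" using lin unfolding real_linear_on_H0_def n_def by blast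
  have lin2: "\<And>X Y a b. X \<in> H0 n \<Longrightarrow> Y \<in> H0 n \<Longrightarrow> \<phi> (complex_of_real a \<cdot>\<^sub>m X + complex_of_real b \<cdot>\<^sub>m Y)
     = complex_of_real a \<cdot>\<^sub>m \<phi> X + complex_of_real b \<cdot>\<^sub>m \<phi> Y"
    using lin unfolding real_linear_on_H0_def n_def by blast
  have unit': "\<And>X. X \<in> IH0 n \<Longrightarrow> unitary_mat m (\<phi> X)" using unit unfolding n_def by blast
  have cA: "A \<in> carrier_mat n n" and cB: "B \<in> carrier_mat n n" and cC: "C \<in> carrier_mat n n"
    using H0_facts[OF bf'(1)] H0_facts[OF bf'(2)] H0_facts[OF bf'(3)] by auto
  have dA: "dim_row A = n" "dim_col A = n" "dim_row B = n" "dim_col B = n" "dim_row C = n" "dim_col C = n"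
    using cA cB cC by auto
  define a where "a = \<phi> A"
  define b where "b = \<phi> B"
  define c where "c = \<phi> C"
  have ca: "a \<in> carrier_mat m m" and cb: "b \<in> carrier_mat m m" and cc: "c \<in> carrier_mat m m"
    unfolding a_def b_def c_def using lin1 bf'(1-3) by auto
  have da: "dim_row a = m" "dim_col a = m" "dim_row b = m" "dim_col b = m" "dim_row c = m" "dim_col c = m"
    using ca cb cc by auto
  have phiM: "\<phi> (A + complex_of_real x \<cdot>\<^sub>m B + complex_of_real y \<cdot>\<^sub>m C) = a + complex_of_real x \<cdot>\<^sub>m b + complex_of_real y \<cdot>\<^sub>m c"
    for x y :: real
  proof -
    have eqM: "A + complex_of_real x \<cdot>\<^sub>m B + complex_of_real y \<cdot>\<^sub>m C
       = complex_of_real 1 \<cdot>\<^sub>m A + complex_of_real 1 \<cdot>\<^sub>m (complex_of_real x \<cdot>\<^sub>m B + complex_of_real y \<cdot>\<^sub>m C)"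
      by (rule eq_matI) (simp_all add: dA)
    have l1: "\<phi> (complex_of_real 1 \<cdot>\<^sub>m A + complex_of_real 1 \<cdot>\<^sub>m (complex_of_real x \<cdot>\<^sub>m B + complex_of_real y \<cdot>\<^sub>m C))
      = complex_of_real 1 \<cdot>\<^sub>m \<phi> A + complex_of_real 1 \<cdot>\<^sub>m \<phi> (complex_of_real x \<cdot>\<^sub>m B + complex_of_real y \<cdot>\<^sub>m C)"
      by (rule lin2[OF bf'(1) H0_comb[OF bf'(2) bf'(3)]])
    have l2: "\<phi> (complex_of_real x \<cdot>\<^sub>m B + complex_of_real y \<cdot>\<^sub>m C) = complex_of_real x \<cdot>\<^sub>m \<phi> B + complex_of_real y \<cdot>\<^sub>m \<phi> C"
      by (rule lin2[OF bf'(2) bf'(3)])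
    have "\<phi> (A + complex_of_real x \<cdot>\<^sub>m B + complex_of_real y \<cdot>\<^sub>m C)
       = complex_of_real 1 \<cdot>\<^sub>m a + complex_of_real 1 \<cdot>\<^sub>m (complex_of_real x \<cdot>\<^sub>m b + complex_of_real y \<cdot>\<^sub>m c)"
      unfolding a_def b_def c_def eqM l1 l2 ..
    also have "\<dots> = a + complex_of_real x \<cdot>\<^sub>m b + complex_of_real y \<cdot>\<^sub>m c"
      by (rule eq_matI) (simp_all add: da)
    finally show ?thesis .
  qed
  define AA where "AA = adj a * a"
  define S1 where "S1 = adj a * b + adj b * a"
  define S2 where "S2 = adj a * c + adj c * a"
  define BB where "BB = adj b * b"
  define CC where "CC = adj c * c"
  define S3 where "S3 = adj b * c + adj c * b"
  have cAA: "AA \<in> carrier_mat m m" "S1 \<in> carrier_mat m m" "S2 \<in> carrier_mat m m"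
    "BB \<in> carrier_mat m m" "CC \<in> carrier_mat m m" "S3 \<in> carrier_mat m m"
    unfolding AA_def S1_def S2_def BB_def CC_def S3_def by (simp_all add: carrier_matI da)
  have U: "AA + complex_of_real x \<cdot>\<^sub>m S1 + complex_of_real y \<cdot>\<^sub>m S2 + (complex_of_real x * complex_of_real x) \<cdot>\<^sub>m BB
     + (complex_of_real y * complex_of_real y) \<cdot>\<^sub>m CC + (complex_of_real x * complex_of_real y) \<cdot>\<^sub>m S3 = 1\<^sub>m m"
    if xy: "(x, y) \<in> {(1,0),(-1,0),(0,1),(0,-1),(3/5,4/5)}" for x y :: real
  proof -
    have "x * x + y * y = 1"
      using xy by (elim insertE emptyE; simp only: prod.inject; elim conjE; hypsubst; simp)
    then have "A + complex_of_real x \<cdot>\<^sub>m B + complex_of_real y \<cdot>\<^sub>m C \<in> IH0 n"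
      by (intro comb_IH0 bf'(1-10))
    then have "unitary_mat m (a + complex_of_real x \<cdot>\<^sub>m b + complex_of_real y \<cdot>\<^sub>m c)"
      using unit' phiM by metis
    then have "adj (a + complex_of_real x \<cdot>\<^sub>m b + complex_of_real y \<cdot>\<^sub>m c) * (a + complex_of_real x \<cdot>\<^sub>m b + complex_of_real y \<cdot>\<^sub>m c) = 1\<^sub>m m"
      unfolding unitary_mat_def by blast
    then have "(adj a + complex_of_real x \<cdot>\<^sub>m adj b + complex_of_real y \<cdot>\<^sub>m adj c) * (a + complex_of_real x \<cdot>\<^sub>m b + complex_of_real y \<cdot>\<^sub>m c) = 1\<^sub>m m"
      unfolding adj_comb[OF ca cb cc] .
    then show ?thesis
      unfolding mat_expand[OF adj_carrier[OF ca] adj_carrier[OF cb] adj_carrier[OF cc] ca cb cc]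
        AA_def S1_def S2_def BB_def CC_def S3_def .
  qed
  have ent: "CC $$ (i,j) = BB $$ (i,j) \<and> BB $$ (i,j) = 1\<^sub>m m $$ (i,j) - AA $$ (i,j) \<and> S3 $$ (i,j) = 0"
    if i: "i < m" and j: "j < m" for i j
  proof -
    have e: "AA $$ (i,j) + complex_of_real x * S1 $$ (i,j) + complex_of_real y * S2 $$ (i,j)
      + (complex_of_real x * complex_of_real x) * BB $$ (i,j) + (complex_of_real y * complex_of_real y) * CC $$ (i,j)
      + (complex_of_real x * complex_of_real y) * S3 $$ (i,j) = 1\<^sub>m m $$ (i,j)"
      if "(x, y) \<in> {(1,0),(-1,0),(0,1),(0,-1),(3/5,4/5)}" for x y :: real
      using U[OF that] entry_comb[OF cAA i j] by metis
    show ?thesis using scal[OF e] by blast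
  qed
  have r1: "CC = BB" by (rule eq_matI) (use ent cAA in auto)
  have r2: "BB = 1\<^sub>m m - AA" by (rule eq_matI) (use ent cAA in auto)
  have r3: "S3 = 0\<^sub>m m m" by (rule eq_matI) (use ent cAA in auto)
  have r4: "re_mat (adj b * c) = 0\<^sub>m m m"
  proof -
    have "adj (adj b * c) = adj c * b" by (simp add: adj_mult da)
    then have "re_mat (adj b * c) = (1/2 :: complex) \<cdot>\<^sub>m S3" unfolding re_mat_def S3_def by simp
    then show ?thesis unfolding r3 by (simp add: smult_zero_mat)
  qed
  show ?thesis
    unfolding A_def[symmetric] B_def[symmetric] C_def[symmetric] a_def[symmetric] b_def[symmetric] c_def[symmetric] abs_sq_def
    using r1 r2 r4 unfolding AA_def BB_def CC_def by simp
qed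

theorem lemma3p9:
  fixes k m :: nat and \<phi> :: "complex mat \<Rightarrow> complex mat"
    and H K Z T V :: "complex mat"
  assumes "k \<ge> 2"
    and lin: "real_linear_on_H0 (2*k) m \<phi>"
    and unit: "\<forall>A \<in> IH0 (2*k). unitary_mat m (\<phi> A)"
    and H: "H \<in> IH0 (2*(k-2))"
    and K: "hermitian_mat 2 K" "unitary_mat 2 K"
    and Z: "unitary_mat 2 Z"
    and T: "T \<in> carrier_mat (2*(k-1)) 2"
    and V: "V \<in> carrier_mat (2*(k-1)) (2*(k-2))"
    and VT: "unitary_mat (2*(k-1)) (hcat V T)"
  shows "abs_sq (\<phi> (four_block_mat (0\<^sub>m (2*(k-1)) (2*(k-1))) (T * Z) (adj Z * adj T) (0\<^sub>m 2 2)))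
           = abs_sq (\<phi> (dsum (T * K * adj T) (- (adj Z * K * Z))))
       \<and> abs_sq (\<phi> (dsum (T * K * adj T) (- (adj Z * K * Z))))
           = 1\<^sub>m m - abs_sq (\<phi> (dsum (V * H * adj V) (0\<^sub>m 2 2)))
       \<and> re_mat (adj (\<phi> (dsum (T * K * adj T) (- (adj Z * K * Z))))
                 * \<phi> (four_block_mat (0\<^sub>m (2*(k-1)) (2*(k-1))) (T * Z) (adj Z * adj T) (0\<^sub>m 2 2)))
           = 0\<^sub>m m m"
proof -
  define p where "p = 2*(k-2)"
  have e1: "2*(k-1) = p+2" unfolding p_def using assms(1) by simp
  have e2: "2*k = p+2+2" unfolding p_def using assms(1) by simp
  have lin': "real_linear_on_H0 (p+2+2) m \<phi>" using lin unfolding e2 .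
  have unit': "\<forall>A \<in> IH0 (p+2+2). unitary_mat m (\<phi> A)" using unit unfolding e2 .
  have H': "H \<in> IH0 p" using H unfolding p_def .
  have T': "T \<in> carrier_mat (p+2) 2" using T unfolding e1 .
  have V': "V \<in> carrier_mat (p+2) p" using V unfolding e1 p_def[symmetric] .
  have VT': "unitary_mat (p+2) (hcat V T)" using VT unfolding e1 .
  show ?thesis unfolding e1 by (rule main_p[OF lin' unit' H' K Z T' V' VT'])
qed

end
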